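(* Let $\beta>0$, $g\in\mathcal G$, and $F(x)=(1-x)^\beta g(x)$ for $x\in[0,1)$. Then \[ \lim_{t\to\infty}t\int_0^1F(s)\big[F(s)-F((1-1/t)s)\big]\,ds=-\frac12\int_0^1F(s)^2\,ds. \]
   Context: $\mathcal G$ denotes the set of functions $g:[0,1)\to\mathbb{R}$ of the form $g(x)=G(1/(1-x))$, where $G:(0,\infty)\to\mathbb{R}$ is continuously differentiable and, for every $\varepsilon>0$, $|G(x)|=o(x^\varepsilon)$ and $|xG'(x)|=o(x^\varepsilon)$ as $x\to\infty$ (i.e. they grow slower than any power function). *)

theory Defs
  imports "HOL-Analysis.Analysis" "HOL-Library.Landau_Symbols"
begin

definition classG :: "(real \<Rightarrow> real) set" where
  "classG = {g. \<exists>G :: real \<Rightarrow> real.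
      G C1_differentiable_on {0<..} \<and>
      (\<forall>\<epsilon>>0. G \<in> o[at_top](\<lambda>x. x powr \<epsilon>)) \<and>
      (\<forall>\<epsilon>>0. (\<lambda>x. x * deriv G x) \<in> o[at_top](\<lambda>x. x powr \<epsilon>)) \<and>
      (\<forall>x\<in>{0..<1}. g x = G (1 / (1 - x)))}"

end

theory Submission
  imports Defs "HOL-Real_Asymp.Real_Asymp"
begin

lemma bound_from_smallo:
  fixes f :: "real \<Rightarrow> real"
  assumes cont: "continuous_on {0<..} f" and o: "f \<in> o[at_top](\<lambda>x. x powr \<epsilon>)" and e: "\<epsilon> > 0"
  shows "\<exists>C>0. \<forall>x\<ge>1. \<bar>f x\<bar> \<le> C * x powr \<epsilon>"
proof -
  have "eventually (\<lambda>x. norm (f x) \<le> 1 * norm (x powr \<epsilon>)) at_top"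
    using landau_o.smallD[OF o, of 1] by simp
  then obtain X where X: "\<And>x. x \<ge> X \<Longrightarrow> \<bar>f x\<bar> \<le> x powr \<epsilon>"
    by (auto simp: eventually_at_top_linorder)
  have cpt: "compact (f ` {1..max 1 X})"
    by (rule compact_continuous_image) (auto intro: continuous_on_subset[OF cont])
  then obtain B where B: "\<And>x. x \<in> {1..max 1 X} \<Longrightarrow> \<bar>f x\<bar> \<le> B"
  proof -
    from compact_imp_bounded[OF cpt] obtain B where "\<forall>y\<in>f ` {1..max 1 X}. norm y \<le> B"
      unfolding bounded_iff by blast
    then show ?thesis using that[of B] by simp
  qed
  show ?thesis
  proof (intro exI[of _ "max B 1 + 1"] conjI allI impI)
    fix x :: real assume x: "x \<ge> 1"
    have p: "x powr \<epsilon> \<ge> 1" using x e by (simp add: ge_one_powr_ge_zero)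
    show "\<bar>f x\<bar> \<le> (max B 1 + 1) * x powr \<epsilon>"
    proof (cases "x \<le> max 1 X")
      case True
      then have "\<bar>f x\<bar> \<le> B" using B x by auto
      moreover have "max B 1 + 1 \<le> (max B 1 + 1) * x powr \<epsilon>" using p
        by (metis le_max_iff_disj less_add_same_cancel1 less_eq_real_def linorder_not_less mult_le_cancel_left1 order.strict_trans zero_less_one)
      ultimately show ?thesis by linarith
    next
      case False
      then have "\<bar>f x\<bar> \<le> x powr \<epsilon>" using X by auto
      moreover have "x powr \<epsilon> \<le> (max B 1 + 1) * x powr \<epsilon>" using p
        by (simp add: mult_le_cancel_right1 le_max_iff_disj)
      ultimately show ?thesis by linarith
    qed
  qed simp
qed

lemma G_facts:
  fixes G :: "real \<Rightarrow> real"
  assumes "G C1_differentiable_on {0<..}"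
  shows "\<And>x. x > 0 \<Longrightarrow> (G has_real_derivative deriv G x) (at x)"
    and "continuous_on {0<..} (deriv G)" and "continuous_on {0<..} G"
proof -
  have d: "\<forall>x\<in>{0<..}. G differentiable at x" and c: "continuous_on {0<..} (\<lambda>x. vector_derivative G (at x))"
    using assms unfolding C1_differentiable_on_eq by auto
  show D: "\<And>x. x > 0 \<Longrightarrow> (G has_real_derivative deriv G x) (at x)"
    using d DERIV_deriv_iff_real_differentiable by auto
  have "\<And>x. x \<in> {0<..} \<Longrightarrow> vector_derivative G (at x) = deriv G x"
    using D by (auto intro!: vector_derivative_at simp: has_real_derivative_iff_has_vector_derivative)
  then show "continuous_on {0<..} (deriv G)" using c by (metis (no_types, lifting) continuous_on_cong)
  show "continuous_on {0<..} G" using d differentiable_imp_continuous_on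
    by (meson differentiable_at_imp_differentiable_on)
qed

locale fsetup =
  fixes G G' :: "real \<Rightarrow> real" and \<beta> \<epsilon> C :: real
  assumes beta: "\<beta> > 0" and eps: "\<epsilon> = \<beta>/4" and Cpos: "C > 0"
  and Gder: "\<And>x. x > 0 \<Longrightarrow> (G has_real_derivative G' x) (at x)"
  and Gb: "\<And>x. x \<ge> 1 \<Longrightarrow> \<bar>G x\<bar> \<le> C * x powr \<epsilon>"
  and G'b: "\<And>x. x \<ge> 1 \<Longrightarrow> \<bar>x * G' x\<bar> \<le> C * x powr \<epsilon>"
begin

definition F0 where "F0 s = (if s < 1 then (1-s) powr \<beta> * G(1/(1-s)) else 0)"
definition D where "D s = (1-s) powr (\<beta>-1) * (-\<beta> * G(1/(1-s)) + (1/(1-s)) * G'(1/(1-s)))"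

lemma F0_deriv:
  assumes s: "s < 1"
  shows "(F0 has_real_derivative D s) (at s)"
proof -
  have w: "1 - s > 0" using s by simp
  have d1: "((\<lambda>s. 1/(1-s)) has_real_derivative 1/(1-s)^2) (at s)"
    using w by (auto intro!: derivative_eq_intros simp: power2_eq_square)
  have d2: "((\<lambda>s. G(1/(1-s))) has_real_derivative G'(1/(1-s)) * (1/(1-s)^2)) (at s)"
    by (rule DERIV_chain2[OF Gder d1]) (use w in simp)
  have d3: "((\<lambda>s. (1-s) powr \<beta>) has_real_derivative \<beta> * (1-s) powr (\<beta>-1) * (-1)) (at s)"
    using w by (auto intro!: derivative_eq_intros)
  have d4: "((\<lambda>s. (1-s) powr \<beta> * G(1/(1-s))) has_real_derivative
      (1-s) powr \<beta> * (G'(1/(1-s)) * (1/(1-s)^2)) + \<beta> * (1-s) powr (\<beta>-1) * (-1) * G(1/(1-s))) (at s)"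
    using DERIV_mult[OF d3 d2] by (simp add: algebra_simps)
  have pw: "(1-s) powr \<beta> = (1-s) powr (\<beta>-1) * (1-s)"
    using powr_add[of "1-s" "\<beta>-1" 1] w by simp
  have eq: "(1-s) powr \<beta> * (G'(1/(1-s)) * (1/(1-s)^2)) + \<beta> * (1-s) powr (\<beta>-1) * (-1) * G(1/(1-s)) = D s"
  proof -
    have key: "\<And>w a b c. w > 0 \<Longrightarrow> a * w * (b * (1/w^2)) + \<beta>*a*(-1)*c = a * (-\<beta>*c + (1/w)*b)"
      by (simp add: field_simps power2_eq_square)
    show ?thesis unfolding D_def pw by (rule key[OF w])
  qed
  show ?thesis
    by (rule has_field_derivative_transform_within_open[OF d4[unfolded eq], of "{..<1}"])
       (use s in \<open>auto simp: F0_def\<close>)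
qed

lemma F0_bound:
  assumes "0 \<le> s" "s < 1"
  shows "\<bar>F0 s\<bar> \<le> C * (1-s) powr (\<beta>-\<epsilon>)"
proof -
  have w: "1 - s > 0" "1 - s \<le> 1" using assms by auto
  have u: "1/(1-s) \<ge> 1" using w by simp
  have "\<bar>F0 s\<bar> = (1-s) powr \<beta> * \<bar>G(1/(1-s))\<bar>" using assms by (simp add: F0_def abs_mult)
  also have "\<dots> \<le> (1-s) powr \<beta> * (C * (1/(1-s)) powr \<epsilon>)"
    by (rule mult_left_mono[OF Gb[OF u]]) simp
  also have "\<dots> = C * (1-s) powr (\<beta>-\<epsilon>)"
    using w by (simp add: powr_divide powr_diff)
  finally show ?thesis .
qed

lemma D_bound:
  assumes "0 \<le> s" "s < 1"
  shows "\<bar>D s\<bar> \<le> (1+\<beta>) * C * (1-s) powr (\<beta>-1-\<epsilon>)"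
proof -
  have w: "1 - s > 0" "1 - s \<le> 1" using assms by auto
  have u: "1/(1-s) \<ge> 1" using w by simp
  have "\<bar>D s\<bar> = (1-s) powr (\<beta>-1) * \<bar>-\<beta> * G(1/(1-s)) + (1/(1-s)) * G'(1/(1-s))\<bar>"
    by (simp add: D_def abs_mult)
  also have "\<dots> \<le> (1-s) powr (\<beta>-1) * (\<beta> * (C * (1/(1-s)) powr \<epsilon>) + C * (1/(1-s)) powr \<epsilon>)"
  proof (rule mult_left_mono)
    have "\<bar>-\<beta> * G(1/(1-s))\<bar> \<le> \<beta> * (C * (1/(1-s)) powr \<epsilon>)"
      using Gb[OF u] beta by (simp add: abs_mult mult_left_mono)
    then show "\<bar>-\<beta> * G(1/(1-s)) + (1/(1-s)) * G'(1/(1-s))\<bar> \<le> \<beta> * (C * (1/(1-s)) powr \<epsilon>) + C * (1/(1-s)) powr \<epsilon>"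
      using G'b[OF u] by linarith
  qed simp
  also have "\<dots> = (1+\<beta>) * C * ((1-s) powr (\<beta>-1) / (1-s) powr \<epsilon>)"
    using w by (simp add: powr_divide field_simps)
  also have "\<dots> = (1+\<beta>) * C * (1-s) powr (\<beta>-1-\<epsilon>)"
    using w by (simp add: powr_diff)
  finally show ?thesis .
qed


lemma F0_cont: "continuous_on {0..1} F0"
  unfolding continuous_on_eq_continuous_within
proof
  fix x :: real assume x: "x \<in> {0..1}"
  show "continuous (at x within {0..1}) F0"
  proof (cases "x < 1")
    case True
    then show ?thesis
      using DERIV_isCont[OF F0_deriv[OF True]] continuous_at_imp_continuous_within by blast
  next
    case False
    then have x1: "x = 1" using x by auto
    have "(F0 \<longlongrightarrow> 0) (at 1 within {0..1})"
    proof (rule Lim_null_comparison)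
      show "eventually (\<lambda>s. norm (F0 s) \<le> C * \<bar>1-s\<bar> powr (\<beta>-\<epsilon>)) (at 1 within {0..1})"
        unfolding eventually_at_filter
      proof (rule always_eventually, intro allI impI)
        fix s :: real assume "s \<noteq> 1" "s \<in> {0..1}"
        then show "norm (F0 s) \<le> C * \<bar>1-s\<bar> powr (\<beta>-\<epsilon>)" using F0_bound[of s] by auto
      qed
      have "((\<lambda>s. C * \<bar>1-s\<bar> powr (\<beta>-\<epsilon>)) \<longlongrightarrow> C * \<bar>1-1\<bar> powr (\<beta>-\<epsilon>)) (at 1 within {0..1})"
        using eps beta by (intro tendsto_intros tendsto_powr') auto
      then show "((\<lambda>s. C * \<bar>1-s\<bar> powr (\<beta>-\<epsilon>)) \<longlongrightarrow> 0) (at 1 within {0..1})" by simp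
    qed
    then show ?thesis unfolding x1 continuous_within by (simp add: F0_def)
  qed
qed

lemma powr_integrable:
  fixes e :: real
  assumes e: "e > -1"
  shows "(\<lambda>s. (1-s) powr e) integrable_on {0..1}"
proof -
  have "((\<lambda>s. (1-s) powr e) has_integral
        ((\<lambda>s. -((1-s) powr (e+1)) / (e+1)) 1 - (\<lambda>s. -((1-s) powr (e+1)) / (e+1)) 0)) {0..1}"
  proof (rule fundamental_theorem_of_calculus_interior)
    show "continuous_on {0..1} (\<lambda>s. -((1-s) powr (e+1)) / (e+1))"
      using e by (intro continuous_intros continuous_on_powr') auto
    fix x :: real assume x: "x \<in> {0<..<1}"
    have "((\<lambda>s. -((1-s) powr (e+1)) / (e+1)) has_real_derivative (1-x) powr e) (at x)"
      using x e by (auto intro!: derivative_eq_intros)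
    then show "((\<lambda>s. -((1-s) powr (e+1)) / (e+1)) has_vector_derivative (1-x) powr e) (at x)"
      by (simp add: has_real_derivative_iff_has_vector_derivative)
  qed simp
  then show ?thesis by blast
qed

lemma dom_bound:
  assumes t: "t \<ge> 2" and s: "0 \<le> s" "s \<le> 1"
  shows "abs (F0 s * (t * (F0 s - F0 ((1-1/t) * s)))) \<le> C * ((1+\<beta>) * C) * (1 + (1-s) powr (2*\<beta>-1-2*\<epsilon>))"
proof -
  have Kpos: "C * ((1+\<beta>) * C) \<ge> 0" using Cpos beta by simp
  have R: "0 \<le> C * ((1+\<beta>) * C) * (1 + (1-s) powr (2*\<beta>-1-2*\<epsilon>))"
    using Kpos by simp
  consider "s = 0" | "s = 1" | "0 < s \<and> s < 1" using s by linarith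
  then show ?thesis
  proof cases
    case 1 then show ?thesis using R by simp
  next
    case 2 then show ?thesis using R by (simp add: F0_def)
  next
    case 3
    define a where "a = (1-1/t) * s"
    have t1: "1/t \<le> 1/2" "1/t > 0" using t by auto
    have a: "0 \<le> a" "a < s" using 3 t1 by (auto simp: a_def mult_pos_pos)
    have "\<And>x. a \<le> x \<Longrightarrow> x \<le> s \<Longrightarrow> DERIV F0 x :> D x" using 3 F0_deriv by auto
    from MVT2[OF a(2) this] obtain z where z: "a < z" "z < s" "F0 s - F0 a = (s - a) * D z"
      by blast
    have eqz: "t * (F0 s - F0 a) = s * D z" using z(3) t by (simp add: a_def field_simps)
    have Dz: "\<bar>D z\<bar> \<le> (1+\<beta>) * C * (1 + (1-s) powr (\<beta>-1-\<epsilon>))"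
    proof -
      have pz: "(1-z) powr (\<beta>-1-\<epsilon>) \<le> 1 + (1-s) powr (\<beta>-1-\<epsilon>)"
      proof (cases "\<beta>-1-\<epsilon> \<ge> 0")
        case True
        have "(1-z) powr (\<beta>-1-\<epsilon>) \<le> 1" using True z a 3 by (intro powr_le1) auto
        moreover have "0 \<le> (1-s) powr (\<beta>-1-\<epsilon>)" by simp
        ultimately show ?thesis by linarith
      next
        case False
        have "(1-z) powr (\<beta>-1-\<epsilon>) \<le> (1-s) powr (\<beta>-1-\<epsilon>)" using False z 3 by (intro powr_mono2') auto
        then show ?thesis by linarith
      qed
      have "\<bar>D z\<bar> \<le> (1+\<beta>) * C * (1-z) powr (\<beta>-1-\<epsilon>)" using D_bound[of z] z a 3 by auto
      also have "\<dots> \<le> (1+\<beta>) * C * (1 + (1-s) powr (\<beta>-1-\<epsilon>))"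
        using pz Cpos beta by (intro mult_left_mono) auto
      finally show ?thesis .
    qed
    have "abs (F0 s * (t * (F0 s - F0 a))) = \<bar>F0 s\<bar> * (s * \<bar>D z\<bar>)"
      using eqz 3 by (simp add: abs_mult)
    also have "\<dots> \<le> \<bar>F0 s\<bar> * \<bar>D z\<bar>"
      using 3 by (intro mult_left_mono mult_left_le_one_le) auto
    also have "\<dots> \<le> \<bar>F0 s\<bar> * ((1+\<beta>) * C * (1 + (1-s) powr (\<beta>-1-\<epsilon>)))"
      using Dz by (intro mult_left_mono) auto
    also have "\<dots> \<le> (C * (1-s) powr (\<beta>-\<epsilon>)) * ((1+\<beta>) * C * (1 + (1-s) powr (\<beta>-1-\<epsilon>)))"
      using F0_bound[of s] 3 Cpos beta by (intro mult_right_mono) auto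
    also have "\<dots> = C * ((1+\<beta>) * C) * ((1-s) powr (\<beta>-\<epsilon>) + (1-s) powr (2*\<beta>-1-2*\<epsilon>))"
    proof -
      have "(1-s) powr (\<beta>-\<epsilon>) * (1-s) powr (\<beta>-1-\<epsilon>) = (1-s) powr (2*\<beta>-1-2*\<epsilon>)"
        using powr_add[of "1-s" "\<beta>-\<epsilon>" "\<beta>-1-\<epsilon>"] by (simp add: algebra_simps)
      then show ?thesis by (simp add: algebra_simps)
    qed
    also have "\<dots> \<le> C * ((1+\<beta>) * C) * (1 + (1-s) powr (2*\<beta>-1-2*\<epsilon>))"
    proof -
      have "(1-s) powr (\<beta>-\<epsilon>) \<le> 1" using 3 eps beta by (intro powr_le1) auto
      then show ?thesis using Kpos by (intro mult_left_mono) auto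
    qed
    finally show ?thesis by (simp add: a_def)
  qed
qed


lemma pointwise:
  assumes s: "0 \<le> s" "s \<le> 1"
  shows "((\<lambda>t. F0 s * (t * (F0 s - F0 ((1-1/t) * s)))) \<longlongrightarrow> F0 s * (s * D s)) at_top"
proof -
  consider "s = 0" | "s = 1" | "0 < s \<and> s < 1" using s by linarith
  then show ?thesis
  proof cases
    case 1 then show ?thesis by simp
  next
    case 2 then show ?thesis by (simp add: F0_def)
  next
    case 3
    have d: "((\<lambda>y. (F0 y - F0 s) / (y - s)) \<longlongrightarrow> D s) (at s)"
      using F0_deriv[of s] 3 by (simp add: has_field_derivative_iff)
    have y: "filterlim (\<lambda>t. (1-1/t) * s) (at s) at_top"
      unfolding filterlim_at
    proof (intro conjI)
      show "eventually (\<lambda>t. (1-1/t) * s \<in> UNIV \<and> (1-1/t) * s \<noteq> s) at_top"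
        using eventually_gt_at_top[of 0] by eventually_elim (use 3 in auto)
      show "((\<lambda>t. (1-1/t) * s) \<longlongrightarrow> s) at_top" by real_asymp
    qed
    have "((\<lambda>t. F0 s * (s * ((\<lambda>y. (F0 y - F0 s) / (y - s)) ((1-1/t) * s)))) \<longlongrightarrow> F0 s * (s * D s)) at_top"
      by (intro tendsto_intros filterlim_compose[OF d y])
    then show ?thesis
    proof (rule Lim_transform_eventually)
      show "eventually (\<lambda>t. F0 s * (s * ((\<lambda>y. (F0 y - F0 s) / (y - s)) ((1-1/t) * s))) = F0 s * (t * (F0 s - F0 ((1-1/t) * s)))) at_top"
        using eventually_gt_at_top[of 0] by eventually_elim (use 3 in \<open>auto simp: field_simps\<close>)
    qed
  qed
qed

lemma ibp: "((\<lambda>s. (F0 s)^2 / 2 + F0 s * (s * D s)) has_integral 0) {0..1}"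
proof -
  have "((\<lambda>s. (F0 s)^2 / 2 + F0 s * (s * D s)) has_integral
         ((\<lambda>s. s * (F0 s)^2 / 2) 1 - (\<lambda>s. s * (F0 s)^2 / 2) 0)) {0..1}"
  proof (rule fundamental_theorem_of_calculus_interior)
    show "continuous_on {0..1} (\<lambda>s. s * (F0 s)^2 / 2)"
      using F0_cont by (intro continuous_intros) auto
    fix x :: real assume x: "x \<in> {0<..<1}"
    have dF: "(F0 has_real_derivative D x) (at x)" using x F0_deriv by auto
    have "((\<lambda>s. s * (F0 s * F0 s) / 2) has_real_derivative (1 * (F0 x * F0 x) + x * (D x * F0 x + F0 x * D x)) / 2) (at x)"
      by (intro DERIV_cdivide DERIV_cong[OF DERIV_mult[OF DERIV_ident DERIV_mult[OF dF dF]]]) (simp add: algebra_simps)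
    then have "((\<lambda>s. s * (F0 s)^2 / 2) has_real_derivative (1 * (F0 x * F0 x) + x * (D x * F0 x + F0 x * D x)) / 2) (at x)"
      by (simp add: power2_eq_square)
    also have "(1 * (F0 x * F0 x) + x * (D x * F0 x + F0 x * D x)) / 2 = (F0 x)^2 / 2 + F0 x * (x * D x)"
      by (simp add: field_simps power2_eq_square)
    finally show "((\<lambda>s. s * (F0 s)^2 / 2) has_vector_derivative (F0 x)^2 / 2 + F0 x * (x * D x)) (at x)"
      by (simp add: has_real_derivative_iff_has_vector_derivative)
  qed simp
  then show ?thesis by (simp add: F0_def)
qed

lemma main_limit:
  "((\<lambda>t. t * integral {0..1} (\<lambda>s. F0 s * (F0 s - F0 ((1-1/t) * s))))
     \<longlongrightarrow> -(1/2) * integral {0..1} (\<lambda>s. (F0 s)^2)) at_top"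
proof -
  define f where "f t s = F0 s * (t * (F0 s - F0 ((1-1/t) * s)))" for t s
  define K where "K = C * ((1+\<beta>) * C)"
  define h where "h s = (1 + (1-s) powr (2*\<beta>-1-2*\<epsilon>)) * K" for s
  define g where "g s = F0 s * (s * D s)" for s
  have fint: "f t integrable_on {0..1}" if t: "t \<ge> 1" for t
  proof -
    have c1: "0 \<le> 1-1/t" "1-1/t \<le> 1" using t by auto
    have "continuous_on {0..1} (\<lambda>s. F0 ((1-1/t) * s))"
    proof (rule continuous_on_compose2[OF F0_cont])
      show "continuous_on {0..1} (\<lambda>s. (1-1/t) * s)" by (intro continuous_intros)
      show "(\<lambda>s. (1-1/t) * s) ` {0..1} \<subseteq> {0..1}"
      proof
        fix y assume "y \<in> (\<lambda>s. (1-1/t) * s) ` {0..1}"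
        then obtain s where s: "0 \<le> s" "s \<le> 1" "y = (1-1/t) * s" by auto
        have "(1-1/t) * s \<le> 1" by (rule mult_le_one[OF c1(2) s(1,2)])
        moreover have "0 \<le> (1-1/t) * s" using c1 s by simp
        ultimately show "y \<in> {0..1}" using s by simp
      qed
    qed
    then show ?thesis unfolding f_def using F0_cont
      by (intro integrable_continuous_interval continuous_intros) auto
  qed
  have hint: "h integrable_on {0..1}"
    unfolding h_def using eps beta
    by (intro integrable_on_mult_left integrable_add integrable_const_ivl powr_integrable) auto
  have F2int: "(\<lambda>s. (F0 s)^2) integrable_on {0..1}"
    by (intro integrable_continuous_interval continuous_intros F0_cont)
  have gI: "(g has_integral -(1/2) * integral {0..1} (\<lambda>s. (F0 s)^2)) {0..1}"
  proof -
    have a: "((\<lambda>s. (F0 s)^2 / 2) has_integral integral {0..1} (\<lambda>s. (F0 s)^2) / 2) {0..1}"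
      using has_integral_divide[OF integrable_integral[OF F2int]] .
    have "((\<lambda>s. ((F0 s)^2 / 2 + F0 s * (s * D s)) - (F0 s)^2 / 2) has_integral
           0 - integral {0..1} (\<lambda>s. (F0 s)^2) / 2) {0..1}"
      by (rule has_integral_diff[OF ibp a])
    then show ?thesis unfolding g_def[abs_def] by simp
  qed
  have lim: "((\<lambda>t. integral {0..1} (f (max t 2))) \<longlongrightarrow> integral {0..1} g) at_top"
  proof (rule tendsto_at_topI_sequentially)
    fix X :: "nat \<Rightarrow> real" assume X: "filterlim X at_top sequentially"
    have T: "filterlim (\<lambda>k. max (X k) 2) at_top sequentially"
      by (rule filterlim_at_top_mono[OF X]) auto
    show "(\<lambda>k. integral {0..1} (f (max (X k) 2))) \<longlonglongrightarrow> integral {0..1} g"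
    proof (rule dominated_convergence(2)[where h=h])
      show "\<And>k. f (max (X k) 2) integrable_on {0..1}" by (rule fint) auto
      show "h integrable_on {0..1}" by (rule hint)
      fix x :: real assume x: "x \<in> {0..1}"
      show "norm (f (max (X k) 2) x) \<le> h x" for k
        using dom_bound[of "max (X k) 2" x] x by (auto simp: f_def h_def K_def mult.commute)
      show "(\<lambda>k. f (max (X k) 2) x) \<longlonglongrightarrow> g x"
        using filterlim_compose[OF pointwise[of x] T] x by (auto simp: f_def g_def)
    qed
  qed
  then have lim2: "((\<lambda>t. integral {0..1} (f (max t 2))) \<longlongrightarrow> -(1/2) * integral {0..1} (\<lambda>s. (F0 s)^2)) at_top"
    using integral_unique[OF gI] by simp
  show ?thesis
  proof (rule Lim_transform_eventually[OF lim2])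
    show "eventually (\<lambda>t. integral {0..1} (f (max t 2)) = t * integral {0..1} (\<lambda>s. F0 s * (F0 s - F0 ((1-1/t) * s)))) at_top"
      using eventually_ge_at_top[of 2]
    proof eventually_elim
      case (elim t)
      have "f (max t 2) = (\<lambda>s. t * (F0 s * (F0 s - F0 ((1-1/t) * s))))"
        using elim by (auto simp: f_def fun_eq_iff algebra_simps max_def)
      then show ?case by simp
    qed
  qed
qed

end

theorem mainTheorem14:
  fixes \<beta> :: real and g F :: "real \<Rightarrow> real"
  assumes "\<beta> > 0"
    and "g \<in> classG"
    and "\<forall>x\<in>{0..<1}. F x = (1 - x) powr \<beta> * g x"
  shows "((\<lambda>t. t * integral {0..1} (\<lambda>s. F s * (F s - F ((1 - 1 / t) * s))))
           \<longlongrightarrow> - (1/2) * integral {0..1} (\<lambda>s. (F s)\<^sup>2)) at_top"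
proof -
  from assms(2) obtain G where G1: "G C1_differentiable_on {0<..}"
    and Go: "\<And>e. e > 0 \<Longrightarrow> G \<in> o[at_top](\<lambda>x. x powr e)"
    and G'o: "\<And>e. e > 0 \<Longrightarrow> (\<lambda>x. x * deriv G x) \<in> o[at_top](\<lambda>x. x powr e)"
    and gG: "\<And>x. x \<in> {0..<1} \<Longrightarrow> g x = G (1 / (1 - x))"
    unfolding classG_def by blast
  note GF = G_facts[OF G1]
  have e: "\<beta>/4 > 0" using assms(1) by simp
  obtain C1 where C1: "C1 > 0" "\<And>x. x \<ge> 1 \<Longrightarrow> \<bar>G x\<bar> \<le> C1 * x powr (\<beta>/4)"
    using bound_from_smallo[OF GF(3) Go[OF e] e] by blast
  have cd: "continuous_on {0<..} (\<lambda>x. x * deriv G x)"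
    using GF(2) by (intro continuous_intros) auto
  obtain C2 where C2: "C2 > 0" "\<And>x. x \<ge> 1 \<Longrightarrow> \<bar>x * deriv G x\<bar> \<le> C2 * x powr (\<beta>/4)"
    using bound_from_smallo[OF cd G'o[OF e] e] by blast
  interpret fs: fsetup G "deriv G" \<beta> "\<beta>/4" "max C1 C2"
  proof
    show "\<beta> > 0" by (rule assms(1))
    show "max C1 C2 > 0" using C1 by simp
    show "\<And>x. x > 0 \<Longrightarrow> (G has_real_derivative deriv G x) (at x)" by (rule GF(1))
    fix x :: real assume x: "x \<ge> 1"
    have "C1 * x powr (\<beta>/4) \<le> max C1 C2 * x powr (\<beta>/4)" by (intro mult_right_mono) auto
    then show "\<bar>G x\<bar> \<le> max C1 C2 * x powr (\<beta>/4)" using C1(2)[OF x] by linarith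
    have "C2 * x powr (\<beta>/4) \<le> max C1 C2 * x powr (\<beta>/4)" by (intro mult_right_mono) auto
    then show "\<bar>x * deriv G x\<bar> \<le> max C1 C2 * x powr (\<beta>/4)" using C2(2)[OF x] by linarith
  qed simp
  have FF0: "F x = fs.F0 x" if "0 \<le> x" "x < 1" for x
    using that assms(3) gG by (simp add: fs.F0_def)
  have i2: "integral {0..1} (\<lambda>s. (F s)\<^sup>2) = integral {0..1} (\<lambda>s. (fs.F0 s)^2)"
    by (rule integral_spike[of "{1}"]) (auto simp: FF0)
  show ?thesis unfolding i2
  proof (rule Lim_transform_eventually[OF fs.main_limit])
    show "eventually (\<lambda>t. t * integral {0..1} (\<lambda>s. fs.F0 s * (fs.F0 s - fs.F0 ((1-1/t) * s))) =
       t * integral {0..1} (\<lambda>s. F s * (F s - F ((1 - 1 / t) * s)))) at_top"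
      using eventually_ge_at_top[of 2]
    proof eventually_elim
      case (elim t)
      have c1: "0 \<le> 1-1/t" "1-1/t < 1" using elim by auto
      have "integral {0..1} (\<lambda>s. F s * (F s - F ((1 - 1 / t) * s))) =
            integral {0..1} (\<lambda>s. fs.F0 s * (fs.F0 s - fs.F0 ((1-1/t) * s)))"
      proof (rule integral_spike[of "{1}"])
        fix s :: real assume s: "s \<in> {0..1} - {1}"
        then have s1: "0 \<le> s" "s < 1" by auto
        have "(1-1/t) * s < 1"
        proof -
          have "(1-1/t) * s \<le> s" using s1 c1 by (intro mult_left_le_one_le) auto
          then show ?thesis using s1 by linarith
        qed
        moreover have "0 \<le> (1-1/t) * s" using s1 c1 by simp
        ultimately show "fs.F0 s * (fs.F0 s - fs.F0 ((1-1/t) * s)) = F s * (F s - F ((1 - 1 / t) * s))"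
          using FF0 s1 by simp
      qed simp
      then show ?case by simp
    qed
  qed
qed

end
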